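(* Let $q$ be even and $u\in\mathbf{SL}_n(q)$ unipotent of type $\lambda=(\lambda_1,\dots,\lambda_k)$, and assume $\lambda_i\ge\lambda_{i+1}\ge3$ for some $1\le i\le k-1$. Then the conjugacy class $\mathcal{O}_u$ in $\mathbf{SL}_n(q)$ is of type D.
   Context: Unipotent type $(\lambda_1\ge\dots\ge\lambda_k)$ = sizes of Jordan blocks. Conjugacy classes are racks with $x\triangleright y=xyx^{-1}$. A subrack $Y$ is decomposable if $Y=R\sqcup S$ with nonempty subracks $R,S$, $Y\triangleright R=R$, $Y\triangleright S=S$. Type D: a decomposable subrack $R\sqcup S$ with $r\in R,s\in S$ and $r\triangleright(s\triangleright(r\triangleright s))\neq s$. *)

theory Defs
  imports "Jordan_Normal_Form.Jordan_Normal_Form"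
begin

definition SL_mat :: "nat \<Rightarrow> 'a :: field mat set" where
  "SL_mat n = {A. A \<in> carrier_mat n n \<and> det A = 1}"

definition inv_mat :: "nat \<Rightarrow> 'a :: field mat \<Rightarrow> 'a mat" where
  "inv_mat n A = (SOME B. B \<in> carrier_mat n n \<and> A * B = 1\<^sub>m n \<and> B * A = 1\<^sub>m n)"

definition conj_op :: "nat \<Rightarrow> 'a :: field mat \<Rightarrow> 'a mat \<Rightarrow> 'a mat" where
  "conj_op n x y = x * y * inv_mat n x"

definition conj_class_SL :: "nat \<Rightarrow> 'a :: field mat \<Rightarrow> 'a mat set" where
  "conj_class_SL n u = {conj_op n g u | g. g \<in> SL_mat n}"

(* u is unipotent of type lam = (lam_1 >= ... >= lam_k): its Jordan blocks all have
   eigenvalue 1 and their sizes are, as a multiset, lam *)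
definition unipotent_of_type :: "'a :: field mat \<Rightarrow> nat list \<Rightarrow> bool" where
  "unipotent_of_type u lam \<longleftrightarrow> sorted_wrt (\<ge>) lam \<and>
     (\<exists>n_as. jordan_nf u n_as \<and> (\<forall>p \<in> set n_as. snd p = 1) \<and> mset (map fst n_as) = mset lam)"

definition subrack :: "('r \<Rightarrow> 'r \<Rightarrow> 'r) \<Rightarrow> 'r set \<Rightarrow> 'r set \<Rightarrow> bool" where
  "subrack op X Y \<longleftrightarrow> Y \<subseteq> X \<and> (\<forall>a\<in>Y. \<forall>b\<in>Y. op a b \<in> Y)"

definition rack_act_set :: "('r \<Rightarrow> 'r \<Rightarrow> 'r) \<Rightarrow> 'r set \<Rightarrow> 'r set \<Rightarrow> 'r set" where
  "rack_act_set op Y R = {op y r | y r. y \<in> Y \<and> r \<in> R}"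

definition rack_type_D :: "('r \<Rightarrow> 'r \<Rightarrow> 'r) \<Rightarrow> 'r set \<Rightarrow> bool" where
  "rack_type_D op X \<longleftrightarrow> (\<exists>R S.
     subrack op X (R \<union> S) \<and> R \<inter> S = {} \<and> R \<noteq> {} \<and> S \<noteq> {} \<and>
     subrack op X R \<and> subrack op X S \<and>
     rack_act_set op (R \<union> S) R = R \<and> rack_act_set op (R \<union> S) S = S \<and>
     (\<exists>r\<in>R. \<exists>s\<in>S. op r (op s (op r s)) \<noteq> s))"

end

theory Submission
  imports Defs
begin


lemma inv_mat_eq:
  fixes A B :: "'a :: field mat"
  assumes A: "A \<in> carrier_mat n n" and B: "B \<in> carrier_mat n n" and AB: "A * B = 1\<^sub>m n"
  shows "inv_mat n A = B"
proof -
  have BA: "B * A = 1\<^sub>m n" by (rule mat_mult_left_right_inverse[OF A B AB])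
  let ?C = "inv_mat n A"
  have "?C \<in> carrier_mat n n \<and> A * ?C = 1\<^sub>m n \<and> ?C * A = 1\<^sub>m n"
    unfolding inv_mat_def by (rule someI[of _ B], insert B AB BA, auto)
  hence C: "?C \<in> carrier_mat n n" "A * ?C = 1\<^sub>m n" "?C * A = 1\<^sub>m n" by auto
  have "?C * (A * B) = ?C" using C AB by simp
  hence "?C = ?C * (A * B)" by simp
  also have "\<dots> = (?C * A) * B" by (rule assoc_mult_mat[symmetric, OF C(1) A B])
  also have "\<dots> = B" using C B by simp
  finally show ?thesis .
qed

lemma SL_inv:
  fixes A :: "'a :: field mat"
  assumes "A \<in> SL_mat n"
  shows "inv_mat n A \<in> carrier_mat n n" "A * inv_mat n A = 1\<^sub>m n" "inv_mat n A * A = 1\<^sub>m n"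
    "inv_mat n A \<in> SL_mat n"
proof -
  have A: "A \<in> carrier_mat n n" "det A = 1" using assms unfolding SL_mat_def by auto
  have "A \<in> Units (ring_mat TYPE('a) n undefined)"
    by (rule det_non_zero_imp_unit[OF A(1)], insert A, auto)
  then obtain B where B: "B \<in> carrier_mat n n" "A * B = 1\<^sub>m n"
    unfolding Units_def ring_mat_simps by auto
  have BA: "B * A = 1\<^sub>m n" by (rule mat_mult_left_right_inverse[OF A(1) B])
  have eq: "inv_mat n A = B" by (rule inv_mat_eq[OF A(1) B])
  show "inv_mat n A \<in> carrier_mat n n" "A * inv_mat n A = 1\<^sub>m n" "inv_mat n A * A = 1\<^sub>m n"
    using eq B BA by auto
  have "det A * det B = 1" using det_mult[OF A(1) B(1)] B(2) by simp
  hence "det B = 1" using A by simp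
  thus "inv_mat n A \<in> SL_mat n" using eq B unfolding SL_mat_def by auto
qed

lemma SL_mult: "A \<in> SL_mat n \<Longrightarrow> B \<in> SL_mat n \<Longrightarrow> A * B \<in> SL_mat n"
  unfolding SL_mat_def by (auto simp: det_mult)

lemma mult_support:
  fixes A B :: "'a :: comm_ring_1 mat"
  assumes A: "A \<in> carrier_mat n n" and B: "B \<in> carrier_mat n n" and i: "i < n" and j: "j < n"
    and S: "S \<subseteq> {..<n}" and z: "\<And>l. l < n \<Longrightarrow> l \<notin> S \<Longrightarrow> A $$ (i,l) * B $$ (l,j) = 0"
  shows "(A * B) $$ (i,j) = (\<Sum>l\<in>S. A $$ (i,l) * B $$ (l,j))"
proof -
  have "(A * B) $$ (i,j) = (\<Sum>l\<in>{0..<n}. A $$ (i,l) * B $$ (l,j))"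
    using A B i j by (simp add: scalar_prod_def)
  also have "\<dots> = (\<Sum>l\<in>S. A $$ (i,l) * B $$ (l,j))"
    by (rule sum.mono_neutral_right, insert S z, auto)
  finally show ?thesis .
qed



lemma SL_carrier: "A \<in> SL_mat n \<Longrightarrow> A \<in> carrier_mat n n" unfolding SL_mat_def by auto

lemma SL_inv_cancel:
  fixes A X :: "'a :: field mat"
  assumes A: "A \<in> SL_mat n" and X: "X \<in> carrier_mat n nc"
  shows "inv_mat n A * (A * X) = X" "A * (inv_mat n A * X) = X"
proof -
  note I = SL_inv[OF A] and Ac = SL_carrier[OF A]
  have "inv_mat n A * (A * X) = (inv_mat n A * A) * X" 
    by (rule assoc_mult_mat[symmetric, OF I(1) Ac X])
  thus "inv_mat n A * (A * X) = X" using I X by simp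
  have "A * (inv_mat n A * X) = (A * inv_mat n A) * X" 
    by (rule assoc_mult_mat[symmetric, OF Ac I(1) X])
  thus "A * (inv_mat n A * X) = X" using I X by simp
qed

lemma inv_mult_SL:
  fixes A B :: "'a :: field mat"
  assumes A: "A \<in> SL_mat n" and B: "B \<in> SL_mat n"
  shows "inv_mat n (A * B) = inv_mat n B * inv_mat n A"
proof (rule inv_mat_eq)
  note IA = SL_inv[OF A] and IB = SL_inv[OF B] and Ac = SL_carrier[OF A] and Bc = SL_carrier[OF B]
  show "A * B \<in> carrier_mat n n" using Ac Bc by simp
  show "inv_mat n B * inv_mat n A \<in> carrier_mat n n" using IA IB by simp
  have "A * B * (inv_mat n B * inv_mat n A) = A * (B * (inv_mat n B * inv_mat n A))"
    using Ac Bc IA IB by (simp add: assoc_mult_mat[of _ n n _ n _ n])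
  also have "\<dots> = 1\<^sub>m n" using SL_inv_cancel(2)[OF B IA(1)] IA Ac by simp
  finally show "A * B * (inv_mat n B * inv_mat n A) = 1\<^sub>m n" .
qed

lemma inv_inv_SL:
  fixes A :: "'a :: field mat"
  assumes A: "A \<in> SL_mat n"
  shows "inv_mat n (inv_mat n A) = A"
  by (rule inv_mat_eq, insert SL_inv[OF A] SL_carrier[OF A], auto)

lemma class_SL:
  fixes u :: "'a :: field mat"
  assumes u: "u \<in> SL_mat n" and x: "x \<in> conj_class_SL n u"
  shows "x \<in> SL_mat n"
proof -
  from x obtain g where g: "g \<in> SL_mat n" and xg: "x = g * u * inv_mat n g"
    unfolding conj_class_SL_def conj_op_def by auto
  show ?thesis unfolding xg by (intro SL_mult SL_inv(4) g u)
qed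

lemma class_conj:
  fixes u :: "'a :: field mat"
  assumes u: "u \<in> SL_mat n" and x: "x \<in> conj_class_SL n u" and y: "y \<in> SL_mat n"
  shows "conj_op n y x \<in> conj_class_SL n u"
proof -
  from x obtain g where g: "g \<in> SL_mat n" and xg: "x = g * u * inv_mat n g"
    unfolding conj_class_SL_def conj_op_def by auto
  note gc = SL_carrier[OF g] and yc = SL_carrier[OF y] and uc = SL_carrier[OF u]
    and ig = SL_inv(1)[OF g] and iy = SL_inv(1)[OF y]
  have "conj_op n y x = conj_op n (y * g) u"
    unfolding conj_op_def xg inv_mult_SL[OF y g]
    using gc yc uc ig iy by (simp add: assoc_mult_mat[of _ n n _ n _ n])
  thus ?thesis using SL_mult[OF y g] unfolding conj_class_SL_def by blast
qed


lemma typeD_crit: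
  fixes u :: "'a :: field mat" and \<pi> :: "'a mat \<Rightarrow> 'b :: ab_group_add"
  assumes u: "u \<in> SL_mat n"
  and Km: "\<And>x y. x \<in> K \<Longrightarrow> y \<in> K \<Longrightarrow> x * y \<in> K"
  and Ki: "\<And>x. x \<in> K \<Longrightarrow> x \<in> SL_mat n \<Longrightarrow> inv_mat n x \<in> K"
  and pm: "\<And>x y. x \<in> K \<Longrightarrow> y \<in> K \<Longrightarrow> \<pi> (x * y) = \<pi> x + \<pi> y"
  and r: "r \<in> conj_class_SL n u" "r \<in> K" and s: "s \<in> conj_class_SL n u" "s \<in> K"
  and prs: "\<pi> r \<noteq> \<pi> s"
  and ne: "r * s * (r * s) \<noteq> s * r * (s * r)"
  shows "rack_type_D (conj_op n) (conj_class_SL n u)"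
proof -
  let ?O = "conj_class_SL n u"
  let ?op = "conj_op n"
  have OSL: "\<And>x. x \<in> ?O \<Longrightarrow> x \<in> SL_mat n" using class_SL[OF u] by blast
  have pi_conj: "\<pi> (?op y x) = \<pi> x \<and> ?op y x \<in> K"
    if y: "y \<in> K" "y \<in> SL_mat n" and x: "x \<in> K" for x y
  proof -
    have iy: "inv_mat n y \<in> K" using Ki y by auto
    have one: "1\<^sub>m n \<in> K" using Km[OF y(1) iy] SL_inv(2)[OF y(2)] by simp
    have p1: "\<pi> (1\<^sub>m n) = 0"
    proof -
      have "\<pi> (1\<^sub>m n) = \<pi> (1\<^sub>m n * 1\<^sub>m n)" by simp
      also have "\<dots> = \<pi> (1\<^sub>m n) + \<pi> (1\<^sub>m n)" by (rule pm[OF one one])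
      finally show ?thesis by simp
    qed
    have pyi: "\<pi> y + \<pi> (inv_mat n y) = 0"
      using pm[OF y(1) iy] SL_inv(2)[OF y(2)] p1 by simp
    have yx: "y * x \<in> K" by (rule Km[OF y(1) x])
    have "\<pi> (?op y x) = \<pi> (y * x) + \<pi> (inv_mat n y)"
      unfolding conj_op_def by (rule pm[OF yx iy])
    also have "\<dots> = \<pi> x + (\<pi> y + \<pi> (inv_mat n y))" unfolding pm[OF y(1) x] by (simp add: ac_simps)
    finally have "\<pi> (?op y x) = \<pi> x" using pyi by simp
    moreover have "?op y x \<in> K" unfolding conj_op_def by (rule Km[OF yx iy])
    ultimately show ?thesis by simp
  qed
  define R where "R = {x \<in> ?O. x \<in> K \<and> \<pi> x = \<pi> r}"
  define S where "S = {x \<in> ?O. x \<in> K \<and> \<pi> x = \<pi> s}"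
  have RS: "R \<union> S \<subseteq> ?O \<inter> K" unfolding R_def S_def by auto
  have closed: "?op y x \<in> T" if T: "T = {x \<in> ?O. x \<in> K \<and> \<pi> x = v}" and y: "y \<in> R \<union> S" and x: "x \<in> T" for T v y x
  proof -
    have yK: "y \<in> K" "y \<in> SL_mat n" using y RS OSL by auto
    have xK: "x \<in> K" "x \<in> ?O" using x T by auto
    show ?thesis using pi_conj[OF yK xK(1)] class_conj[OF u xK(2) yK(2)] x T by auto
  qed
  have act: "rack_act_set ?op (R \<union> S) T = T" if T: "T = {x \<in> ?O. x \<in> K \<and> \<pi> x = v}" for T v
  proof
    show "rack_act_set ?op (R \<union> S) T \<subseteq> T" unfolding rack_act_set_def using closed[OF T] by auto
    show "T \<subseteq> rack_act_set ?op (R \<union> S) T"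
    proof
      fix x assume x: "x \<in> T"
      have rR: "r \<in> R" unfolding R_def using r by auto
      have rSL: "r \<in> SL_mat n" using OSL r by auto
      have ir: "inv_mat n r \<in> K" "inv_mat n r \<in> SL_mat n" using Ki r(2) rSL SL_inv(4) by auto
      have xK: "x \<in> K" "x \<in> ?O" using x T by auto
      have x': "?op (inv_mat n r) x \<in> T" 
        using pi_conj[OF ir xK(1)] class_conj[OF u xK(2) ir(2)] x T by auto
      have xc: "x \<in> carrier_mat n n" using OSL[OF xK(2)] SL_carrier by auto
      have "?op r (?op (inv_mat n r) x) = x"
        unfolding conj_op_def inv_inv_SL[OF rSL]
        using SL_carrier[OF rSL] SL_inv[OF rSL] xc
        by (simp add: assoc_mult_mat[of _ n n _ n _ n] SL_inv_cancel[OF rSL, where nc=n])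
      thus "x \<in> rack_act_set ?op (R \<union> S) T" unfolding rack_act_set_def using rR x' by force
    qed
  qed
  have actR: "rack_act_set ?op (R \<union> S) R = R" by (rule act[OF R_def])
  have actS: "rack_act_set ?op (R \<union> S) S = S" by (rule act[OF S_def])
  have rR: "r \<in> R" unfolding R_def using r by auto
  have sS: "s \<in> S" unfolding S_def using s by auto
  have disj: "R \<inter> S = {}" unfolding R_def S_def using prs by auto
  have sub: "subrack ?op ?O (R \<union> S)" "subrack ?op ?O R" "subrack ?op ?O S"
    unfolding subrack_def using RS closed[OF R_def] closed[OF S_def] R_def S_def by auto
  have rSL: "r \<in> SL_mat n" and sSL: "s \<in> SL_mat n" using OSL r s by auto
  note rc = SL_carrier[OF rSL] and sc = SL_carrier[OF sSL] and ri = SL_inv[OF rSL] and si = SL_inv[OF sSL]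
  have "?op r (?op s (?op r s)) \<noteq> s"
  proof
    assume E: "?op r (?op s (?op r s)) = s"
    have "?op r (?op s (?op r s)) * (r * (s * r)) = s * (r * (s * r))" using E by simp
    moreover have "?op r (?op s (?op r s)) * (r * (s * r)) = r * (s * (r * s))"
      unfolding conj_op_def using rc sc ri si
      by (simp add: assoc_mult_mat[of _ n n _ n _ n] SL_inv_cancel[OF rSL, where nc=n] SL_inv_cancel[OF sSL, where nc=n])
    ultimately have "r * (s * (r * s)) = s * (r * (s * r))" by simp
    thus False using ne rc sc by (simp add: assoc_mult_mat[of _ n n _ n _ n])
  qed
  thus ?thesis unfolding rack_type_D_def using sub disj rR sS actR actS by blast
qed



definition unitri :: "nat \<Rightarrow> 'a :: comm_ring_1 mat \<Rightarrow> bool" where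
  "unitri n A \<longleftrightarrow> A \<in> carrier_mat n n \<and> (\<forall>i<n. A $$ (i,i) = 1) \<and> (\<forall>i<n. \<forall>j<i. A $$ (i,j) = 0)"

lemma unitri_mult:
  assumes A: "unitri n A" and B: "unitri n B"
  shows "unitri n (A * B)"
proof -
  have Ac: "A \<in> carrier_mat n n" and Bc: "B \<in> carrier_mat n n" using A B unfolding unitri_def by auto
  have d: "(A * B) $$ (i,i) = 1" if i: "i < n" for i
  proof -
    have "(A * B) $$ (i,i) = (\<Sum>l\<in>{i}. A $$ (i,l) * B $$ (l,i))"
    proof (rule mult_support[OF Ac Bc i i])
      fix l assume "l < n" "l \<notin> {i}"
      thus "A $$ (i,l) * B $$ (l,i) = 0" using A B i unfolding unitri_def
        by (cases "l < i") auto
    qed (insert i, auto)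
    thus ?thesis using A B i unfolding unitri_def by auto
  qed
  have z: "(A * B) $$ (i,j) = 0" if i: "i < n" and j: "j < i" for i j
  proof -
    have "(A * B) $$ (i,j) = (\<Sum>l\<in>{}. A $$ (i,l) * B $$ (l,j))"
    proof (rule mult_support[OF Ac Bc i])
      show "j < n" using i j by auto
      fix l assume "l < n" "l \<notin> {}"
      thus "A $$ (i,l) * B $$ (l,j) = 0" using A B i j unfolding unitri_def
        by (cases "l < i") auto
    qed auto
    thus ?thesis by simp
  qed
  show ?thesis unfolding unitri_def using Ac Bc d z by auto
qed

lemma unitri_super:
  assumes A: "unitri n A" and B: "unitri n B" and c: "Suc c < n"
  shows "(A * B) $$ (c, Suc c) = A $$ (c, Suc c) + B $$ (c, Suc c)"
proof -
  have Ac: "A \<in> carrier_mat n n" and Bc: "B \<in> carrier_mat n n" using A B unfolding unitri_def by auto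
  have "(A * B) $$ (c, Suc c) = (\<Sum>l\<in>{c, Suc c}. A $$ (c,l) * B $$ (l,Suc c))"
  proof (rule mult_support[OF Ac Bc])
    fix l assume "l < n" "l \<notin> {c, Suc c}"
    thus "A $$ (c,l) * B $$ (l,Suc c) = 0" using A B c unfolding unitri_def
      by (cases "l < c") auto
  qed (insert c, auto)
  thus ?thesis using A B c unfolding unitri_def by (simp add: add.commute)
qed

lemma unitri_inv:
  fixes A B :: "'a :: comm_ring_1 mat"
  assumes A: "unitri n A" and Bc: "B \<in> carrier_mat n n" and AB: "A * B = 1\<^sub>m n"
  shows "unitri n B"
proof -
  have Ac: "A \<in> carrier_mat n n" using A unfolding unitri_def by auto
  have main: "\<forall>j\<le>i. B $$ (i,j) = (if i = j then 1 else 0)" if "i < n" for i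
    using that
  proof (induction "n - i" arbitrary: i rule: less_induct)
    case (less i)
    show ?case
    proof (intro allI impI)
      fix j assume j: "j \<le> i"
      have "(A * B) $$ (i,j) = (\<Sum>l\<in>{i}. A $$ (i,l) * B $$ (l,j))"
      proof (rule mult_support[OF Ac Bc less.prems])
        show "j < n" using j less.prems by auto
        fix l assume l: "l < n" "l \<notin> {i}"
        show "A $$ (i,l) * B $$ (l,j) = 0"
        proof (cases "l < i")
          case True thus ?thesis using A less.prems unfolding unitri_def by auto
        next
          case False
          hence "i < l" using l by auto
          hence "B $$ (l,j) = 0" using less.hyps[of l] l j by auto
          thus ?thesis by simp
        qed
      qed (insert less.prems, auto)
      also have "\<dots> = B $$ (i,j)" using A less.prems unfolding unitri_def by auto
      finally show "B $$ (i,j) = (if i = j then 1 else 0)"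
        using AB less.prems j by auto
    qed
  qed
  show ?thesis unfolding unitri_def using Bc main by auto
qed



definition jf :: "nat set \<Rightarrow> nat \<Rightarrow> nat \<Rightarrow> 'a :: {zero,one}" where
  "jf BS i j = (if i = j then 1 else if Suc i = j \<and> j \<notin> BS then 1 else 0)"

fun bstarts :: "nat list \<Rightarrow> nat set" where
  "bstarts [] = {0}"
| "bstarts (a # ns) = insert 0 ((+) a ` bstarts ns)"

lemma bstarts_0[simp]: "0 \<in> bstarts ns" by (cases ns) auto

lemma jordan_matrix_Cons: "jordan_matrix ((a,1) # xs) = four_block_mat (jordan_block a 1)
   (0\<^sub>m a (dim_col (jordan_matrix xs))) (0\<^sub>m (dim_row (jordan_matrix xs)) a) (jordan_matrix xs)"
  unfolding jordan_matrix_def by (simp add: Let_def)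

lemma jordan_matrix_entries:
  "i < sum_list ns \<Longrightarrow> j < sum_list ns \<Longrightarrow>
   jordan_matrix (map (\<lambda>x. (x, 1 :: 'a :: {zero,one})) ns) $$ (i,j) = jf (bstarts ns) i j"
proof (induction ns arbitrary: i j)
  case Nil thus ?case by simp
next
  case (Cons a ns)
  let ?J = "jordan_matrix (map (\<lambda>x. (x, 1 :: 'a)) ns)"
  have dims: "dim_row ?J = sum_list ns" "dim_col ?J = sum_list ns" by (simp_all add: o_def)
  show ?case
  proof (cases "i < a")
    case True
    show ?thesis
    proof (cases "j < a")
      case True
      thus ?thesis using `i < a` Cons.prems dims
        by (auto simp: jordan_matrix_Cons jf_def)
    next
      case False
      have "a + 0 \<in> (+) a ` bstarts ns" by (rule imageI, simp)
      hence "\<not> Suc i < a \<Longrightarrow> Suc i \<in> (+) a ` bstarts ns" using `i < a` by (metis Suc_leI add_0_right le_neq_implies_less)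
      thus ?thesis using `i < a` False Cons.prems dims
        by (auto simp: jordan_matrix_Cons jf_def)
    qed
  next
    case False
    show ?thesis
    proof (cases "j < a")
      case True
      thus ?thesis using `\<not> i < a` Cons.prems dims
        by (auto simp: jordan_matrix_Cons jf_def)
    next
      case jF: False
      have IH: "?J $$ (i - a, j - a) = jf (bstarts ns) (i - a) (j - a)"
        using Cons.IH[of "i - a" "j - a"] Cons.prems False jF by auto
      have "jordan_matrix (map (\<lambda>x. (x, 1 :: 'a)) (a # ns)) $$ (i,j) = ?J $$ (i - a, j - a)"
        using False jF Cons.prems dims by (simp add: jordan_matrix_Cons)
      also have "\<dots> = jf (bstarts (a # ns)) i j"
        unfolding IH jf_def using False jF
        by (auto simp: image_iff)
      finally show ?thesis .
    qed
  qed
qed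



definition sg :: "nat \<Rightarrow> nat \<Rightarrow> nat \<Rightarrow> nat" where
  "sg k t i = (if i = k then t else if i = t then Suc t else if i = Suc t then k else i)"

definition Jm :: "nat \<Rightarrow> nat set \<Rightarrow> 'a :: {zero,one} mat" where
  "Jm n BS = mat n n (\<lambda>(i,j). jf BS i j)"

definition Sm :: "nat \<Rightarrow> nat set \<Rightarrow> nat \<Rightarrow> nat \<Rightarrow> 'a :: {zero,one} mat" where
  "Sm n BS k t = mat n n (\<lambda>(i,j). jf BS (sg k t i) (sg k t j))"

lemma Jm_carrier[simp]: "Jm n BS \<in> carrier_mat n n" unfolding Jm_def by auto
lemma Sm_carrier[simp]: "Sm n BS k t \<in> carrier_mat n n" unfolding Sm_def by auto
lemma Jm_index[simp]: "i < n \<Longrightarrow> j < n \<Longrightarrow> Jm n BS $$ (i,j) = jf BS i j" unfolding Jm_def by auto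
lemma Sm_index[simp]: "i < n \<Longrightarrow> j < n \<Longrightarrow> Sm n BS k t $$ (i,j) = jf BS (sg k t i) (sg k t j)"
  unfolding Sm_def by auto

lemma unitri_Jm: "unitri n (Jm n BS :: 'a :: comm_ring_1 mat)"
  unfolding unitri_def by (auto simp: jf_def)

context
  fixes n p k t :: nat and BS :: "nat set"
  assumes k: "k = Suc (Suc p)" and kt: "k < t" and tn: "Suc t < n"
    and B1: "Suc p \<notin> BS" and B2: "k \<notin> BS" and B3: "Suc k \<in> BS" and B4: "t \<in> BS" and B5: "Suc t \<notin> BS"
begin

lemma unitri_Sm: "unitri n (Sm n BS k t :: 'a :: comm_ring_1 mat)"
  unfolding unitri_def using k kt tn B3 B4 by (auto simp: jf_def sg_def)

lemma super_vals: "(Jm n BS :: 'a :: comm_ring_1 mat) $$ (Suc p, Suc (Suc p)) = 1"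
   "(Sm n BS k t :: 'a :: comm_ring_1 mat) $$ (Suc p, Suc (Suc p)) = 0"
  using k kt tn B2 B4 by (auto simp: jf_def sg_def)

lemma prod_ne: "(Jm n BS * Sm n BS k t * (Jm n BS * Sm n BS k t)) $$ (p,t) \<noteq>
   (Sm n BS k t * Jm n BS * (Sm n BS k t * Jm n BS :: 'a :: field mat)) $$ (p,t)"
proof -
  let ?J = "Jm n BS :: 'a mat" and ?S = "Sm n BS k t :: 'a mat"
  have pn: "p < n" "Suc p < n" "k < n" "t < n" using k kt tn by auto
  have JSc: "\<And>x. x < n \<Longrightarrow> (?J * ?S) $$ (x,t) = ?J $$ (x,t) + ?J $$ (x,k)"
  proof -
    fix x assume x: "x < n"
    have "(?J * ?S) $$ (x,t) = (\<Sum>l\<in>{t,k}. ?J $$ (x,l) * ?S $$ (l,t))"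
      by (rule mult_support[OF Jm_carrier Sm_carrier x pn(4)], insert pn B5 kt,
          auto simp: jf_def sg_def)
    also have "\<dots> = ?J $$ (x,t) + ?J $$ (x,k)" using pn kt B5 by (auto simp: jf_def sg_def)
    finally show "(?J * ?S) $$ (x,t) = ?J $$ (x,t) + ?J $$ (x,k)" .
  qed
  have JSr: "\<And>y. y < n \<Longrightarrow> (?J * ?S) $$ (p,y) = ?S $$ (p,y) + ?S $$ (Suc p,y)"
  proof -
    fix y assume y: "y < n"
    have "(?J * ?S) $$ (p,y) = (\<Sum>l\<in>{p, Suc p}. ?J $$ (p,l) * ?S $$ (l,y))"
      by (rule mult_support[OF Jm_carrier Sm_carrier pn(1) y], insert pn B1,
          auto simp: jf_def)
    also have "\<dots> = ?S $$ (p,y) + ?S $$ (Suc p,y)" using pn B1 y by (auto simp: jf_def simp del: Sm_index)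
    finally show "(?J * ?S) $$ (p,y) = ?S $$ (p,y) + ?S $$ (Suc p,y)" .
  qed
  have SJc: "\<And>x. x < n \<Longrightarrow> (?S * ?J) $$ (x,t) = ?S $$ (x,t)"
  proof -
    fix x assume x: "x < n"
    have "(?S * ?J) $$ (x,t) = (\<Sum>l\<in>{t}. ?S $$ (x,l) * ?J $$ (l,t))"
      by (rule mult_support[OF Sm_carrier Jm_carrier x pn(4)], insert pn B4,
          auto simp: jf_def)
    also have "\<dots> = ?S $$ (x,t)" using pn by (auto simp: jf_def simp del: Sm_index)
    finally show "(?S * ?J) $$ (x,t) = ?S $$ (x,t)" .
  qed
  have SJr: "\<And>y. y < n \<Longrightarrow> (?S * ?J) $$ (p,y) = ?J $$ (p,y) + ?J $$ (Suc p,y)"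
  proof -
    fix y assume y: "y < n"
    have "(?S * ?J) $$ (p,y) = (\<Sum>l\<in>{p, Suc p}. ?S $$ (p,l) * ?J $$ (l,y))"
      by (rule mult_support[OF Sm_carrier Jm_carrier pn(1) y], insert pn B1 k kt,
          auto simp: jf_def sg_def)
    also have "\<dots> = ?J $$ (p,y) + ?J $$ (Suc p,y)" using pn B1 k kt y
      by (auto simp: jf_def sg_def simp del: Jm_index)
    finally show "(?S * ?J) $$ (p,y) = ?J $$ (p,y) + ?J $$ (Suc p,y)" .
  qed
  have c1: "?J * ?S \<in> carrier_mat n n" "?S * ?J \<in> carrier_mat n n"
    by (rule mult_carrier_mat[OF Jm_carrier Sm_carrier], rule mult_carrier_mat[OF Sm_carrier Jm_carrier])
  have ds: "t \<noteq> k" "k \<noteq> Suc p" "t \<noteq> Suc p" "p \<noteq> k" "p \<noteq> t" "p \<noteq> Suc t" "Suc p \<noteq> Suc t"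
    "k \<noteq> Suc t" "Suc k \<noteq> t \<or> t \<in> BS" "p \<noteq> Suc t" "k \<noteq> p"
    using k kt B4 by auto
  have kk: "\<And>l. Suc l = k \<longleftrightarrow> l = Suc p" using k by auto
  have L: "(?J * ?S * (?J * ?S)) $$ (p,t) = (\<Sum>l\<in>{t,k,Suc p}. (?J * ?S) $$ (p,l) * (?J * ?S) $$ (l,t))"
    by (rule mult_support[OF c1(1) c1(1) pn(1) pn(4)], insert pn B4, auto simp: JSc jf_def kk)
  also have "\<dots> = 1 + 1" using pn kk kt B1 B2 B4 B5 ds
    by (simp add: JSc JSr jf_def sg_def)
  finally have L: "(?J * ?S * (?J * ?S)) $$ (p,t) = 1 + 1" .
  have R: "(?S * ?J * (?S * ?J)) $$ (p,t) = (\<Sum>l\<in>{t,k}. (?S * ?J) $$ (p,l) * (?S * ?J) $$ (l,t))"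
    by (rule mult_support[OF c1(2) c1(2) pn(1) pn(4)], insert pn B5 kt, auto simp: SJc jf_def sg_def)
  also have "\<dots> = 1" using pn kk kt B1 B2 B4 B5 ds
    by (simp add: SJc SJr jf_def sg_def)
  finally have R: "(?S * ?J * (?S * ?J)) $$ (p,t) = 1" .
  have "(1::'a) + 1 \<noteq> 1" by (metis add_cancel_right_right zero_neq_one)
  thus ?thesis unfolding L R .
qed

end


lemma mult_swap_index:
  fixes A :: "'a :: comm_ring_1 mat"
  assumes A: "A \<in> carrier_mat n n" and k: "k < n" and l: "l < n" and i: "i < n" and j: "j < n"
  shows "(A * swaprows_mat n k l) $$ (i,j) = A $$ (i, if j = k then l else if j = l then k else j)"
proof -
  let ?m = "if j = k then l else if j = l then k else j"
  have "(A * swaprows_mat n k l) $$ (i,j) = (\<Sum>x\<in>{?m}. A $$ (i,x) * swaprows_mat n k l $$ (x,j))"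
    by (rule mult_support[OF A swaprows_mat_carrier i j], insert k l j, auto split: if_splits)
  thus ?thesis using k l j by auto
qed

context
  fixes n k t :: nat
  assumes kt: "k < t" and tn: "Suc t < n"
begin

definition "gm = (swaprows_mat n k (Suc t) * swaprows_mat n t (Suc t) :: 'a :: comm_ring_1 mat)"
definition "hm = (swaprows_mat n t (Suc t) * swaprows_mat n k (Suc t) :: 'a :: comm_ring_1 mat)"

lemma gm_carrier[simp]: "gm \<in> carrier_mat n n" "hm \<in> carrier_mat n n"
  unfolding gm_def hm_def by auto

lemma gm_hm: "gm * hm = (1\<^sub>m n :: 'a :: comm_ring_1 mat)"
proof -
  let ?A = "swaprows_mat n k (Suc t) :: 'a mat" and ?B = "swaprows_mat n t (Suc t) :: 'a mat"
  have c: "?A \<in> carrier_mat n n" "?B \<in> carrier_mat n n" by auto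
  have "gm * hm = ?A * ((?B * ?B) * ?A)" unfolding gm_def hm_def
    using assoc_mult_mat[OF c(1) c(2) mult_carrier_mat[OF c(2) c(1)]]
      assoc_mult_mat[OF c(2) c(2) c(1)] by simp
  also have "\<dots> = 1\<^sub>m n"
  proof -
    have "?B * ?B = 1\<^sub>m n" by (rule swaprows_mat_inv, insert kt tn, auto)
    moreover have "?A * ?A = 1\<^sub>m n" by (rule swaprows_mat_inv, insert kt tn, auto)
    ultimately show ?thesis using c by simp
  qed
  finally show ?thesis .
qed

lemma det_gm: "det (gm :: 'a :: comm_ring_1 mat) = 1"
  unfolding gm_def using kt tn
  by (simp add: det_mult[of _ n] det_swaprows_mat)

lemma gm_conj: "gm * Jm n BS * hm = (Sm n BS k t :: 'a :: comm_ring_1 mat)"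
proof -
  let ?A = "swaprows_mat n k (Suc t) :: 'a mat" and ?B = "swaprows_mat n t (Suc t) :: 'a mat"
  let ?J = "Jm n BS :: 'a mat"
  have c: "?A \<in> carrier_mat n n" "?B \<in> carrier_mat n n" by auto
  let ?M = "swaprows k (Suc t) (swaprows t (Suc t) ?J)"
  have M1: "swaprows t (Suc t) ?J = ?B * ?J"
    by (rule swaprows_mat[of _ n n], insert kt tn, auto)
  have M2: "?M = ?A * swaprows t (Suc t) ?J"
    by (rule swaprows_mat[of _ n n], insert kt tn, auto)
  have M: "?A * (?B * ?J) = ?M" by (subst M2, subst M1, rule refl)
  have Mc: "?M \<in> carrier_mat n n" by simp
  have cJ: "?J \<in> carrier_mat n n" by simp
  have cX: "?A * (?B * ?J) \<in> carrier_mat n n" by (rule mult_carrier_mat[OF c(1) mult_carrier_mat[OF c(2) cJ]])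
  have "gm * ?J * hm = ((?A * ?B) * ?J) * (?B * ?A)" unfolding gm_def hm_def ..
  also have "\<dots> = (?A * (?B * ?J)) * (?B * ?A)" unfolding assoc_mult_mat[OF c(1) c(2) cJ] ..
  also have "\<dots> = ((?A * (?B * ?J)) * ?B) * ?A" unfolding assoc_mult_mat[OF cX c(2) c(1)] ..
  also have "\<dots> = ((?M * ?B) * ?A)" unfolding M ..
  also have "\<dots> = Sm n BS k t"
  proof (rule eq_matI)
    fix i j assume i: "i < dim_row (Sm n BS k t :: 'a mat)" and j: "j < dim_col (Sm n BS k t :: 'a mat)"
    hence i: "i < n" and j: "j < n" by (auto simp: Sm_def)
    have dJ: "dim_row ?J = n" "dim_col ?J = n" by (simp_all add: Jm_def)
    have MB: "?M * ?B \<in> carrier_mat n n" by (rule mult_carrier_mat[OF Mc c(2)])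
    define j1 where "j1 = (if j = k then Suc t else if j = Suc t then k else j)"
    define j2 where "j2 = (if j1 = t then Suc t else if j1 = Suc t then t else j1)"
    have j1: "j1 < n" using j kt tn unfolding j1_def by auto
    have e1: "(?M * ?B * ?A) $$ (i,j) = (?M * ?B) $$ (i, j1)"
      unfolding j1_def by (rule mult_swap_index[OF MB _ _ i j], insert kt tn, auto)
    also have "\<dots> = ?M $$ (i, j2)"
      unfolding j2_def by (rule mult_swap_index[OF Mc _ _ i j1], insert kt tn, auto)
    also have "\<dots> = Sm n BS k t $$ (i,j)"
      using kt tn i j j1 unfolding j2_def j1_def by (auto simp: sg_def dJ)
    finally show "(?M * ?B * ?A) $$ (i,j) = Sm n BS k t $$ (i,j)" .
  qed (auto simp: Sm_def Jm_def)
  finally show ?thesis .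
qed

end


lemma bstarts_append: "bstarts (xs @ ys) = bstarts xs \<union> (+) (sum_list xs) ` bstarts ys"
  by (induction xs) (auto simp: image_iff add.assoc)

lemma bstarts_le: "x \<in> bstarts xs \<Longrightarrow> x \<le> sum_list xs"
  by (induction xs arbitrary: x) auto

lemma two_big:
  fixes lam ns :: "nat list"
  assumes m: "mset ns = mset lam" and i1: "1 \<le> i" and i2: "i < length lam"
    and l1: "lam ! (i - 1) \<ge> 3" and l2: "lam ! i \<ge> 3"
  shows "\<exists>xs a ys b zs. ns = xs @ a # ys @ b # zs \<and> a \<ge> 3 \<and> b \<ge> 3"
proof -
  let ?P = "\<lambda>x::nat. 3 \<le> x"
  have dec: "lam = take (i - 1) lam @ lam ! (i - 1) # lam ! i # drop (Suc i) lam"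
  proof -
    have "lam = take (i - 1) lam @ drop (i - 1) lam" by simp
    also have "drop (i - 1) lam = lam ! (i - 1) # drop i lam" using i1 i2
      using Cons_nth_drop_Suc[of "i - 1" lam] i1 i2 by simp
    also have "drop i lam = lam ! i # drop (Suc i) lam" using i2 by (rule Cons_nth_drop_Suc[symmetric])
    finally show ?thesis .
  qed
  have "length (filter ?P lam) \<ge> 2" by (subst dec, insert l1 l2, simp)
  moreover have "length (filter ?P ns) = length (filter ?P lam)"
    by (metis m mset_filter size_mset)
  ultimately have "length (filter ?P ns) \<ge> 2" by simp
  then obtain y1 y2 rest where f: "filter ?P ns = y1 # y2 # rest"
    by (metis Suc_le_length_iff numeral_2_eq_2)
  from filter_eq_ConsD[OF f] obtain us vs where 1: "ns = us @ y1 # vs" "?P y1" "y2 # rest = filter ?P vs"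
    by blast
  from filter_eq_ConsD[OF 1(3)[symmetric]] obtain us2 vs2 where 2: "vs = us2 @ y2 # vs2" "?P y2"
    by blast
  show ?thesis using 1 2 by (intro exI[of _ us] exI[of _ y1] exI[of _ us2] exI[of _ y2] exI[of _ vs2]) simp
qed


lemma conj_mult:
  fixes P Q X Y :: "'a :: comm_ring_1 mat"
  assumes P: "P \<in> carrier_mat n n" and Q: "Q \<in> carrier_mat n n" and PQ: "P * Q = 1\<^sub>m n"
    and X: "X \<in> carrier_mat n n" and Y: "Y \<in> carrier_mat n n"
  shows "Q * (X * Y) * P = (Q * X * P) * (Q * Y * P)"
proof -
  have mc: "\<And>A B. A \<in> carrier_mat n n \<Longrightarrow> B \<in> carrier_mat n n \<Longrightarrow> A * B \<in> carrier_mat n n"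
    by auto
  have c: "\<And>Z. Z \<in> carrier_mat n n \<Longrightarrow> P * (Q * Z) = Z"
  proof -
    fix Z :: "'a mat" assume Z: "Z \<in> carrier_mat n n"
    have "P * (Q * Z) = (P * Q) * Z" using assoc_mult_mat[OF P Q Z] by simp
    thus "P * (Q * Z) = Z" using PQ Z by simp
  qed
  show ?thesis using P Q X Y
    by (simp add: assoc_mult_mat[of _ n n _ n _ n] mc c)
qed

theorem mainTheorem12:
  fixes u :: "'a :: {finite, field} mat" and n :: nat and lam :: "nat list" and i :: nat
  assumes "even (card (UNIV :: 'a set))"
    and "u \<in> SL_mat n"
    and "unipotent_of_type u lam"
    and "1 \<le> i" and "i < length lam"
    and "lam ! (i - 1) \<ge> lam ! i" and "lam ! i \<ge> 3"
  shows "rack_type_D (conj_op n) (conj_class_SL n u)"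
proof -
  note uSL = assms(2)
  have uc: "u \<in> carrier_mat n n" using uSL by (rule SL_carrier)
  from assms(3) obtain n_as where jnf: "jordan_nf u n_as" and s1: "\<forall>p \<in> set n_as. snd p = 1"
    and ms: "mset (map fst n_as) = mset lam"
    unfolding unipotent_of_type_def by auto
  define ns where "ns = map fst n_as"
  have gen: "\<And>l. \<forall>p\<in>set l. snd p = (1::'a) \<Longrightarrow> l = map (\<lambda>x. (x,1)) (map fst l)"
    subgoal for l by (induction l) auto done
  have nas: "n_as = map (\<lambda>x. (x,1)) ns" unfolding ns_def by (rule gen[OF s1])
  define J where "J = jordan_matrix n_as"
  from jnf obtain P Q where wit: "similar_mat_wit u J P Q"
    unfolding jordan_nf_def similar_mat_def J_def by auto
  have dn: "dim_row u = n" using uc by auto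
  from wit have Jc: "J \<in> carrier_mat n n" and Pc: "P \<in> carrier_mat n n" and Qc: "Q \<in> carrier_mat n n"
    and PQ: "P * Q = 1\<^sub>m n" and QP: "Q * P = 1\<^sub>m n" and uPJQ: "u = P * J * Q"
    unfolding similar_mat_wit_def dn Let_def by auto
  have sn: "sum_list ns = n" using Jc unfolding J_def ns_def by (metis carrier_matD(1) jordan_matrix_dim(1))
  from two_big[OF ms[folded ns_def] assms(4) assms(5)] assms(6) assms(7)
  obtain xs a ys b zs where nsd: "ns = xs @ a # ys @ b # zs" and a3: "a \<ge> 3" and b3: "b \<ge> 3"
    using le_trans by blast
  define p0 where "p0 = sum_list xs"
  define p where "p = p0 + a - 3"
  define k where "k = Suc (Suc p)"
  define t where "t = p0 + a + sum_list ys"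
  define BS where "BS = bstarts ns"
  have BSe: "BS = bstarts xs \<union> (+) p0 ` (insert 0 ((+) a ` (bstarts ys \<union> (+) (sum_list ys) ` insert 0 ((+) b ` bstarts zs))))"
    unfolding BS_def nsd p0_def by (simp add: bstarts_append)
  have hx: "\<And>x. x \<in> bstarts xs \<Longrightarrow> x \<le> p0" unfolding p0_def by (rule bstarts_le)
  have hy: "\<And>x. x \<in> bstarts ys \<Longrightarrow> x \<le> sum_list ys" by (rule bstarts_le)
  have nval: "n = p0 + a + sum_list ys + b + sum_list zs" unfolding sn[symmetric] nsd p0_def by simp
  have kv: "k = p0 + a - 1" unfolding k_def p_def using a3 by simp
  have H1: "Suc p \<notin> BS" unfolding BSe p_def using a3 hx hy by force
  have H2: "k \<notin> BS" unfolding BSe kv using a3 hx hy by force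
  have H3: "Suc k \<in> BS" unfolding BSe kv using a3 by force
  have H4: "t \<in> BS" unfolding BSe t_def by force
  have H5: "Suc t \<notin> BS" unfolding BSe t_def using a3 b3 hx hy by force
  have kt: "k < t" unfolding kv t_def using a3 by simp
  have tn: "Suc t < n" unfolding nval t_def using b3 by simp
  have Jeq: "J = Jm n BS"
  proof (rule eq_matI)
    fix i j assume "i < dim_row (Jm n BS :: 'a mat)" "j < dim_col (Jm n BS :: 'a mat)"
    hence ij: "i < n" "j < n" by (auto simp: Jm_def)
    show "J $$ (i,j) = Jm n BS $$ (i,j)"
      unfolding J_def nas BS_def using jordan_matrix_entries[of i ns j, where 'a='a] ij sn by simp
  qed (insert Jc, auto simp: Jm_def)
  have kn: "Suc (Suc p) < n" using kt tn unfolding k_def by simp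
  note mc = mult_carrier_mat[of _ n n _ n]
  have cjQP: "Q * (P * Z * Q) * P = Z" if Z: "Z \<in> carrier_mat n n" for Z
  proof -
    have "Q * (P * Z * Q) * P = (Q * P) * Z * (Q * P)" using Pc Qc Z
      by (simp add: assoc_mult_mat[of _ n n _ n _ n] mc)
    thus ?thesis using QP Z by simp
  qed
  define K where "K = {x \<in> carrier_mat n n. unitri n (Q * x * P)}"
  define \<pi> where "\<pi> = (\<lambda>x. (Q * x * P) $$ (Suc p, Suc (Suc p)))"
  have Km: "x * y \<in> K" if "x \<in> K" "y \<in> K" for x y
    using that conj_mult[OF Pc Qc PQ, of x y] unitri_mult[of n "Q * x * P" "Q * y * P"]
    unfolding K_def by auto
  have Ki: "inv_mat n x \<in> K" if x: "x \<in> K" "x \<in> SL_mat n" for x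
  proof -
    note ix = SL_inv[OF x(2)]
    have xc: "x \<in> carrier_mat n n" using x unfolding K_def by auto
    have "(Q * x * P) * (Q * inv_mat n x * P) = Q * (x * inv_mat n x) * P"
      using conj_mult[OF Pc Qc PQ xc ix(1)] by simp
    also have "\<dots> = 1\<^sub>m n" using ix(2) QP Qc by simp
    finally have "unitri n (Q * inv_mat n x * P)"
      using unitri_inv[of n "Q * x * P" "Q * inv_mat n x * P"] x Qc Pc ix(1) unfolding K_def
      by (simp add: mc)
    thus ?thesis using ix(1) unfolding K_def by auto
  qed
  have pm: "\<pi> (x * y) = \<pi> x + \<pi> y" if "x \<in> K" "y \<in> K" for x y
    using that conj_mult[OF Pc Qc PQ, of x y] unitri_super[OF _ _ kn, of "Q * x * P" "Q * y * P"]
    unfolding K_def \<pi>_def by auto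
  have uJ: "Q * u * P = J" unfolding uPJQ by (rule cjQP[OF Jc])
  have one: "1\<^sub>m n \<in> SL_mat n" unfolding SL_mat_def by auto
  have inv1: "inv_mat n (1\<^sub>m n) = (1\<^sub>m n :: 'a mat)" by (rule inv_mat_eq, auto)
  have ur: "u \<in> conj_class_SL n u"
    unfolding conj_class_SL_def conj_op_def
    by (rule CollectI, rule exI[of _ "1\<^sub>m n"], insert one uc, simp add: inv1)
  have uK: "u \<in> K" using uc unitri_Jm[of n BS] uJ Jeq unfolding K_def by simp
  define G where "G = P * gm n k t * Q"
  define H where "H = P * hm n k t * Q"
  have gc: "gm n k t \<in> carrier_mat n n" "hm n k t \<in> carrier_mat n n" using gm_carrier[OF kt tn] by auto
  have Gc: "G \<in> carrier_mat n n" "H \<in> carrier_mat n n" unfolding G_def H_def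
    by (rule mc[OF mc[OF Pc gc(1)] Qc], rule mc[OF mc[OF Pc gc(2)] Qc])
  have "det G = det P * det (gm n k t :: 'a mat) * det Q" unfolding G_def
    unfolding det_mult[OF mc[OF Pc gc(1)] Qc] det_mult[OF Pc gc(1)] ..
  also have "\<dots> = det (P * Q)" using det_gm[OF kt tn, where 'a='a] by (simp add: det_mult[OF Pc Qc])
  finally have GSL: "G \<in> SL_mat n" unfolding PQ using Gc unfolding SL_mat_def by simp
  have GH: "G * H = 1\<^sub>m n" unfolding G_def H_def
    using conj_mult[OF Qc Pc QP gc(1) gc(2)] gm_hm[OF kt tn, where 'a='a] PQ Pc by simp
  have invG: "inv_mat n G = H" by (rule inv_mat_eq[OF Gc GH])
  define s where "s = P * Sm n BS k t * Q"
  have gJc: "gm n k t * J \<in> carrier_mat n n" by (rule mc[OF gc(1) Jc])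
  have sc: "conj_op n G u = s"
  proof -
    have "s = P * (gm n k t * J * hm n k t) * Q" unfolding s_def Jeq gm_conj[OF kt tn] ..
    also have "\<dots> = (P * (gm n k t * J) * Q) * H" unfolding H_def
      by (rule conj_mult[OF Qc Pc QP gJc gc(2)])
    also have "P * (gm n k t * J) * Q = G * u" unfolding G_def uPJQ
      by (rule conj_mult[OF Qc Pc QP gc(1) Jc])
    finally show ?thesis unfolding conj_op_def invG by simp
  qed
  have sO: "s \<in> conj_class_SL n u" using sc GSL unfolding conj_class_SL_def by blast
  have SJ: "Q * s * P = Sm n BS k t" unfolding s_def by (rule cjQP, simp)
  have sK: "s \<in> K" using unitri_Sm[OF k_def kt tn H1 H2 H3 H4 H5] SJ Pc Qc unfolding K_def s_def
    by (simp add: mc)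
  have prs: "\<pi> u \<noteq> \<pi> s" unfolding \<pi>_def uJ SJ Jeq
    using super_vals[OF k_def kt tn H1 H2 H3 H4 H5, where 'a='a] k_def by simp
  have sc': "s \<in> carrier_mat n n" using sK unfolding K_def by auto
  have ne: "u * s * (u * s) \<noteq> s * u * (s * u)"
  proof
    assume E: "u * s * (u * s) = s * u * (s * u)"
    have usc: "u * s \<in> carrier_mat n n" "s * u \<in> carrier_mat n n" by (rule mc[OF uc sc'], rule mc[OF sc' uc])
    have "Q * (u * s * (u * s)) * P = J * Sm n BS k t * (J * Sm n BS k t)"
      unfolding conj_mult[OF Pc Qc PQ usc(1) usc(1)] conj_mult[OF Pc Qc PQ uc sc'] uJ SJ ..
    moreover have "Q * (s * u * (s * u)) * P = Sm n BS k t * J * (Sm n BS k t * J)"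
      unfolding conj_mult[OF Pc Qc PQ usc(2) usc(2)] conj_mult[OF Pc Qc PQ sc' uc] uJ SJ ..
    ultimately have "J * Sm n BS k t * (J * Sm n BS k t) = Sm n BS k t * J * (Sm n BS k t * J)"
      using E by simp
    thus False using prod_ne[OF k_def kt tn H1 H2 H3 H4 H5, where 'a='a] unfolding Jeq k_def by simp
  qed
  show ?thesis by (rule typeD_crit[OF uSL Km Ki pm ur uK sO sK prs ne])
qed


end
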